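(* For any integers $p\geq3$ and $k\geq1$, $\lambda^{(1)}(p,k)=\lambda^{(2)}(p,k)$ if and only if $p\leq k$.
   Context: $\lambda^{(1)}(p,k)=0$ if $k\in\{1,2\}$ and $\lambda^{(1)}(p,k)=\sqrt{p\frac{(k-1)^{k-1}}{(k-2)^{k-2}}}$ if $k>2$. For $\lambda>0$: $m_\lambda=\min\left\{1,\left(\frac{(p-2)\sqrt p}{\lambda\sqrt{p-1}}\right)^{1/k}\right\}$; $m_*(\lambda)$ is the largest solution $m\in(0,1]$ of $\frac{\lambda m^k}{\sqrt p}=\frac{m^2}{\sqrt{1-m^2}}$; and $\lambda^{(2)}(p,k)=\inf\{\lambda\geq\lambda^{(1)}(p,k): m_*(\lambda)\geq m_\lambda\}$. *)

theory Defs
  imports Complex_Main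
begin

definition lambda1 :: "nat \<Rightarrow> nat \<Rightarrow> real" where
  "lambda1 p k = (if k \<le> 2 then 0
     else sqrt (real p * (real k - 1) ^ (k - 1) / (real k - 2) ^ (k - 2)))"

definition m_lam :: "nat \<Rightarrow> nat \<Rightarrow> real \<Rightarrow> real" where
  "m_lam p k lam = min 1 (root k ((real p - 2) * sqrt (real p) / (lam * sqrt (real p - 1))))"

definition mstar_eq :: "nat \<Rightarrow> nat \<Rightarrow> real \<Rightarrow> real \<Rightarrow> bool" where
  "mstar_eq p k lam m \<longleftrightarrow> 0 < m \<and> m \<le> 1 \<and>
     lam * m ^ k / sqrt (real p) = m\<^sup>2 / sqrt (1 - m\<^sup>2)"

definition is_mstar :: "nat \<Rightarrow> nat \<Rightarrow> real \<Rightarrow> real \<Rightarrow> bool" where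
  "is_mstar p k lam m \<longleftrightarrow> mstar_eq p k lam m \<and> (\<forall>m'. mstar_eq p k lam m' \<longrightarrow> m' \<le> m)"

definition lambda2 :: "nat \<Rightarrow> nat \<Rightarrow> real" where
  "lambda2 p k = Inf {lam. lam > 0 \<and> lam \<ge> lambda1 p k \<and>
      (\<exists>m. is_mstar p k lam m \<and> m \<ge> m_lam p k lam)}"

end

theory Submission imports Defs begin

lemma key:
  fixes t u :: real and n :: nat
  assumes t0: "0 < t" and tu: "t < u" and u1: "u < 1" and tn: "real n / (real n + 1) \<le> t"
  shows "u^n * (1-u) < t^n * (1-t)"
proof -
  define d where "d = u - t"
  have u0: "0 < u" using t0 tu by linarith
  have d0: "0 < d" using tu d_def by simp
  have "-1 \<le> - d/u" using d_def u0 t0 by (simp add: field_simps)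
  from Bernoulli_inequality[OF this, of n]
  have b: "1 - real n * d / u \<le> (t/u)^n"
    using u0 by (simp add: d_def field_simps)
  have tn': "real n * (1 - t) \<le> t"
    using tn by (simp add: field_simps)
  have "t^n = u^n * (t/u)^n" using u0 by (simp add: power_divide)
  also have "\<dots> \<ge> u^n * (1 - real n * d / u)"
    using b u0 by (intro mult_left_mono) auto
  finally have c: "u^n * (1 - real n * d / u) \<le> t^n" .
  have e: "(1 - u) < (1 - real n * d / u) * (1 - t)"
  proof -
    have "(u - real n * d) * (1 - t) - u * (1 - u) = d * (u - real n * (1 - t))"
      by (simp add: d_def algebra_simps)
    also have "\<dots> > 0" using d0 tn' tu by (intro mult_pos_pos) auto
    finally have "u * (1 - u) < (u - real n * d) * (1 - t)" by simp
    then show ?thesis using u0 by (simp add: field_simps)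
  qed
  have "u^n * (1-u) < u^n * ((1 - real n * d / u) * (1 - t))"
    using e u0 by (intro mult_strict_left_mono) auto
  also have "\<dots> = (u^n * (1 - real n * d / u)) * (1 - t)" by simp
  also have "\<dots> \<le> t^n * (1 - t)"
    using c u1 tu by (intro mult_right_mono) auto
  finally show ?thesis .
qed

definition psi :: "nat \<Rightarrow> real \<Rightarrow> real" where
  "psi k m = m ^ k * sqrt (1 - m\<^sup>2) / m\<^sup>2"

lemma psi_pos: "0 < m \<Longrightarrow> m < 1 \<Longrightarrow> 0 < psi k m"
  unfolding psi_def by (auto intro!: divide_pos_pos mult_pos_pos simp: power_less_one_iff abs_square_less_1)

lemma psi_k2:
  assumes "k \<ge> 2" "0 < m" "m < 1"
  shows "psi k m = sqrt ((m\<^sup>2) ^ (k-2) * (1 - m\<^sup>2))"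
proof -
  have "m ^ k = m\<^sup>2 * m ^ (k-2)" using assms(1)
    by (metis le_add_diff_inverse power_add)
  then show ?thesis using assms
    by (simp add: psi_def real_sqrt_mult real_sqrt_power)
qed

lemma psi_dec:
  fixes a b :: real
  assumes k1: "k \<ge> 1" and a0: "0 < a" and ab: "a < b" and b1: "b < 1"
    and ac: "k \<ge> 3 \<Longrightarrow> (real k - 2) / (real k - 1) \<le> a\<^sup>2"
  shows "psi k b < psi k a"
proof (cases "k = 1")
  case True
  have "sqrt (1 - b\<^sup>2) < sqrt (1 - a\<^sup>2)"
    using a0 ab by (simp add: power_strict_mono)
  moreover have "0 \<le> sqrt (1 - b\<^sup>2)" using b1 a0 ab by (simp add: abs_square_le_1)
  ultimately have "sqrt (1 - b\<^sup>2) / b < sqrt (1 - a\<^sup>2) / a"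
    using a0 ab by (smt (verit) divide_strict_left_mono frac_le mult_pos_pos)
  then show ?thesis using True a0 ab unfolding psi_def by (simp add: power2_eq_square)
next
  case False
  then have k2: "k \<ge> 2" using k1 by simp
  have "real (k-2) / (real (k-2) + 1) \<le> a\<^sup>2"
  proof (cases "k \<ge> 3")
    case True
    then show ?thesis using ac by (simp add: of_nat_diff)
  next
    case False
    then have "k = 2" using k2 by simp
    then show ?thesis by simp
  qed
  then have "(b\<^sup>2)^(k-2) * (1 - b\<^sup>2) < (a\<^sup>2)^(k-2) * (1 - a\<^sup>2)"
    using a0 ab b1 by (intro key) (auto simp: power_strict_mono abs_square_less_1)
  then show ?thesis using psi_k2[OF k2] a0 ab b1 by simp
qed


lemma eq_iff:
  assumes lam: "lam > 0" and p: "p \<ge> 1"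
  shows "mstar_eq p k lam m \<longleftrightarrow> (0 < m \<and> m < 1 \<and> lam * psi k m = sqrt (real p))"
proof
  have sp: "sqrt (real p) > 0" using p by simp
  assume h: "mstar_eq p k lam m"
  then have m0: "0 < m" and m1: "m \<le> 1" and e: "lam * m ^ k / sqrt (real p) = m\<^sup>2 / sqrt (1 - m\<^sup>2)"
    unfolding mstar_eq_def by auto
  have "m \<noteq> 1"
  proof
    assume "m = 1"
    then have "lam / sqrt (real p) = 0" using e by simp
    then show False using lam sp by simp
  qed
  then have m1': "m < 1" using m1 by simp
  have s: "sqrt (1 - m\<^sup>2) > 0" using m0 m1' by (simp add: abs_square_less_1)
  from e have "lam * m ^ k * sqrt (1 - m\<^sup>2) = sqrt (real p) * m\<^sup>2"
    using s sp by (simp add: field_simps)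
  then have "lam * psi k m = sqrt (real p)" using m0 unfolding psi_def by (simp add: field_simps)
  then show "0 < m \<and> m < 1 \<and> lam * psi k m = sqrt (real p)" using m0 m1' by simp
next
  have sp: "sqrt (real p) > 0" using p by simp
  assume h: "0 < m \<and> m < 1 \<and> lam * psi k m = sqrt (real p)"
  then have m0: "0 < m" and m1': "m < 1" and e: "lam * psi k m = sqrt (real p)" by auto
  have s: "sqrt (1 - m\<^sup>2) > 0" using m0 m1' by (simp add: abs_square_less_1)
  from e have "lam * m ^ k * sqrt (1 - m\<^sup>2) = sqrt (real p) * m\<^sup>2"
    using m0 unfolding psi_def by (simp add: field_simps)
  then have "lam * m ^ k / sqrt (real p) = m\<^sup>2 / sqrt (1 - m\<^sup>2)"
    using s sp by (simp add: field_simps)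
  then show "mstar_eq p k lam m" unfolding mstar_eq_def using m0 m1' by simp
qed

lemma mlam_iff:
  assumes p: "p \<ge> 3" and k: "k \<ge> 1" and lam: "lam > 0" and m0: "0 < m" and m1: "m < 1"
    and e: "lam * psi k m = sqrt (real p)"
  shows "m_lam p k lam \<le> m \<longleftrightarrow> (real p - 2) / (real p - 1) \<le> m\<^sup>2"
proof -
  define A where "A = (real p - 2) * sqrt (real p) / (lam * sqrt (real p - 1))"
  have sp: "sqrt (real p) > 0" using p by simp
  have sp1: "sqrt (real p - 1) > 0" using p by simp
  have A0: "A > 0" unfolding A_def using p lam sp sp1 by (intro divide_pos_pos mult_pos_pos) auto
  define s where "s = sqrt (1 - m\<^sup>2)"
  have s: "s > 0" using m0 m1 unfolding s_def by (simp add: abs_square_less_1)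
  have s2: "s\<^sup>2 = 1 - m\<^sup>2" unfolding s_def using m0 m1 by (simp add: abs_square_le_1)
  have q2: "(sqrt (real p - 1))\<^sup>2 = real p - 1" using p by simp
  have 1: "m_lam p k lam \<le> m \<longleftrightarrow> root k A \<le> m"
    unfolding m_lam_def A_def using m1 by auto
  have "root k A \<le> m \<longleftrightarrow> root k A \<le> root k (m ^ k)"
    using k m0 by (simp add: real_root_power_cancel)
  also have "\<dots> \<longleftrightarrow> A \<le> m ^ k" using k by simp
  finally have 2: "root k A \<le> m \<longleftrightarrow> A \<le> m ^ k" .
  have lmk: "lam * m ^ k = sqrt (real p) * m\<^sup>2 / s"
    using e m0 s unfolding psi_def s_def by (simp add: field_simps)
  have "A \<le> m ^ k \<longleftrightarrow> A * lam \<le> lam * m ^ k" using lam by (simp add: mult.commute)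
  also have "\<dots> \<longleftrightarrow> (real p - 2) * sqrt (real p) / sqrt (real p - 1) \<le> sqrt (real p) * m\<^sup>2 / s"
    unfolding lmk A_def using lam by simp
  also have "\<dots> \<longleftrightarrow> sqrt (real p) * ((real p - 2) / sqrt (real p - 1)) \<le> sqrt (real p) * (m\<^sup>2 / s)"
    by (simp add: field_simps)
  also have "\<dots> \<longleftrightarrow> (real p - 2) / sqrt (real p - 1) \<le> m\<^sup>2 / s"
    using sp by (simp only: mult_le_cancel_left_pos)
  also have "\<dots> \<longleftrightarrow> (real p - 2) * s \<le> m\<^sup>2 * sqrt (real p - 1)"
    using sp1 s by (simp add: divide_le_eq le_divide_eq mult.commute mult.left_commute)
  also have "\<dots> \<longleftrightarrow> ((real p - 2) * s)\<^sup>2 \<le> (m\<^sup>2 * sqrt (real p - 1))\<^sup>2"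
    using p s sp1 by (intro power2_le_iff_abs_le[symmetric] | simp)+
  also have "\<dots> \<longleftrightarrow> (real p - 2)^2 * (1 - m\<^sup>2) \<le> (m\<^sup>2)\<^sup>2 * (real p - 1)"
    by (simp add: power_mult_distrib s2 q2)
  also have "\<dots> \<longleftrightarrow> 0 \<le> (m\<^sup>2 + (real p - 2)) * ((real p - 1) * m\<^sup>2 - (real p - 2))"
    by (auto simp: algebra_simps power2_eq_square)
  also have "\<dots> \<longleftrightarrow> 0 \<le> ((real p - 1) * m\<^sup>2 - (real p - 2))"
  proof -
    have "m\<^sup>2 + (real p - 2) > 0" using p m0 by (simp add: add_pos_nonneg)
    then show ?thesis by (simp add: zero_le_mult_iff)
  qed
  also have "\<dots> \<longleftrightarrow> (real p - 2) / (real p - 1) \<le> m\<^sup>2"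
    using p by (simp add: field_simps)
  finally show ?thesis using 1 2 by simp
qed


lemma lam1_psi:
  assumes k: "k \<ge> 3" and p: "p \<ge> 1"
  shows "lambda1 p k * psi k (sqrt ((real k - 2) / (real k - 1))) = sqrt (real p)"
proof -
  define t where "t = (real k - 2) / (real k - 1)"
  have t0: "0 < t" and t1: "t < 1" using k unfolding t_def by (auto simp: field_simps)
  have st: "0 < sqrt t" "sqrt t < 1" using t0 t1 by auto
  have ps: "psi k (sqrt t) = sqrt (t ^ (k-2) * (1 - t))"
    using psi_k2[of k "sqrt t"] k st t0 by simp
  obtain n where n: "k = n + 3" using k by (metis add.commute le_Suc_ex)
  define a where "a = real n + 1"
  have a0: "a > 0" unfolding a_def by simp
  have kk: "real k - 2 = a" "real k - 1 = a + 1" "k - 2 = Suc n" "k - 1 = Suc (Suc n)"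
    unfolding a_def n by auto
  have "(real k - 1) ^ (k - 1) / (real k - 2) ^ (k - 2) * (t ^ (k-2) * (1 - t)) = 1"
  proof -
    have e1: "1 - a / (a + 1) = 1 / (a + 1)" using a0 by (simp add: field_simps)
    have e2: "(a / (a + 1)) ^ Suc n = a ^ Suc n / (a + 1) ^ Suc n" by (simp add: power_divide)
    have pa: "a ^ Suc n > 0" "(a + 1) ^ Suc n > 0" using a0 by auto
    have e3: "(a + 1) ^ Suc (Suc n) = (a + 1) * (a + 1) ^ Suc n" by simp
    have g: "\<And>x y B::real. x > 0 \<Longrightarrow> y > 0 \<Longrightarrow> B > 0 \<Longrightarrow> B * y / x * (x / y * (1 / B)) = 1"
      by simp
    show ?thesis unfolding t_def kk e1 e2 e3 using pa a0 g by simp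
  qed
  then have Q: "Q * R = 1" if "Q = (real k - 1) ^ (k - 1) / (real k - 2) ^ (k - 2)" "R = t ^ (k-2) * (1 - t)" for Q R
    using that \<open>_ = 1\<close> by (simp only:)
  have l1: "lambda1 p k = sqrt (real p * ((real k - 1) ^ (k - 1) / (real k - 2) ^ (k - 2)))"
    unfolding lambda1_def using k by (simp add: mult.assoc times_divide_eq_right)
  have "lambda1 p k * psi k (sqrt t) = sqrt (real p * ((real k - 1) ^ (k - 1) / (real k - 2) ^ (k - 2)) * (t ^ (k-2) * (1 - t)))"
    unfolding l1 ps by (simp only: real_sqrt_mult)
  also have "\<dots> = sqrt (real p * (((real k - 1) ^ (k - 1) / (real k - 2) ^ (k - 2)) * (t ^ (k-2) * (1 - t))))"
    by (simp only: mult.assoc)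
  also have "\<dots> = sqrt (real p)" using Q by simp
  finally show ?thesis unfolding t_def .
qed


theorem lemmaB3:
  fixes p k :: nat
  assumes "p \<ge> 3" and "k \<ge> 1"
  shows "lambda1 p k = lambda2 p k \<longleftrightarrow> p \<le> k"
proof -
  have p3: "p \<ge> 3" and k1: "k \<ge> 1" using assms by auto
  have p1: "p \<ge> 1" using p3 by simp
  have sp: "sqrt (real p) > 0" using p3 by simp
  define S where "S = {lam. lam > 0 \<and> lam \<ge> lambda1 p k \<and>
      (\<exists>m. is_mstar p k lam m \<and> m \<ge> m_lam p k lam)}"
  have l2: "lambda2 p k = Inf S" unfolding S_def lambda2_def by simp
  define m0 where "m0 = sqrt ((real p - 2) / (real p - 1))"
  have m0p: "0 < m0" "m0 < 1" "m0\<^sup>2 = (real p - 2) / (real p - 1)"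
    using p3 unfolding m0_def by (auto simp: field_simps)
  show ?thesis
  proof (cases "p \<le> k")
    case True
    then have k3: "k \<ge> 3" using p3 by simp
    define mc where "mc = sqrt ((real k - 2) / (real k - 1))"
    have mcp: "0 < mc" "mc < 1" "mc\<^sup>2 = (real k - 2) / (real k - 1)"
      using k3 unfolding mc_def by (auto simp: field_simps)
    have L: "lambda1 p k * psi k mc = sqrt (real p)"
      unfolding mc_def by (rule lam1_psi[OF k3 p1])
    have lpos: "lambda1 p k > 0"
      unfolding lambda1_def using k3 p3 by (auto intro!: divide_pos_pos mult_pos_pos)
    have eqmc: "mstar_eq p k (lambda1 p k) mc"
      using eq_iff[OF lpos p1] mcp L by simp
    have ismc: "is_mstar p k (lambda1 p k) mc"
      unfolding is_mstar_def
    proof (intro conjI allI impI eqmc)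
      fix m' assume "mstar_eq p k (lambda1 p k) m'"
      then have m': "0 < m'" "m' < 1" "lambda1 p k * psi k m' = sqrt (real p)"
        using eq_iff[OF lpos p1] by auto
      show "m' \<le> mc"
      proof (rule ccontr)
        assume "\<not> m' \<le> mc"
        then have "psi k m' < psi k mc"
          using mcp m' k1 by (intro psi_dec) auto
        then have "lambda1 p k * psi k m' < lambda1 p k * psi k mc"
          using lpos by simp
        then show False using L m' by simp
      qed
    qed
    have "(real p - 2) / (real p - 1) \<le> (real k - 2) / (real k - 1)"
      using True p3 k3 by (simp add: field_simps)
    then have "m_lam p k (lambda1 p k) \<le> mc"
      using mlam_iff[OF p3 k1 lpos mcp(1) mcp(2) L] mcp by simp
    then have inS: "lambda1 p k \<in> S" unfolding S_def using lpos ismc by auto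
    have "Inf S = lambda1 p k"
      by (rule cInf_eq_minimum[OF inS]) (auto simp: S_def)
    then show ?thesis using True l2 by simp
  next
    case False
    then have kp: "k < p" by simp
    have psi0: "psi k m0 > 0" using psi_pos m0p by auto
    define lam0 where "lam0 = sqrt (real p) / psi k m0"
    have lam0p: "lam0 > 0" unfolding lam0_def using sp psi0 by simp
    have L0: "lam0 * psi k m0 = sqrt (real p)" unfolding lam0_def using psi0 by simp
    have acm0: "(real k - 2) / (real k - 1) \<le> m0\<^sup>2" if "k \<ge> 3"
      using that kp unfolding m0p(3) by (simp add: field_simps)
    have gt: "lambda1 p k < lam0"
    proof (cases "k \<ge> 3")
      case False
      then show ?thesis unfolding lambda1_def using lam0p by simp
    next
      case k3: True
      define mc where "mc = sqrt ((real k - 2) / (real k - 1))"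
      have mcp: "0 < mc" "mc < 1" "mc\<^sup>2 = (real k - 2) / (real k - 1)"
        using k3 unfolding mc_def by (auto simp: field_simps)
      have L: "lambda1 p k * psi k mc = sqrt (real p)"
        unfolding mc_def by (rule lam1_psi[OF k3 p1])
      have "(real k - 2) / (real k - 1) < (real p - 2) / (real p - 1)"
        using kp p3 k3 by (simp add: field_simps)
      then have "mc\<^sup>2 < m0\<^sup>2" using mcp m0p by simp
      then have "mc < m0" using m0p by (intro power_less_imp_less_base[of mc 2 m0]) auto
      then have "psi k m0 < psi k mc" using mcp m0p k1 by (intro psi_dec) auto
      moreover have "psi k mc > 0" using psi_pos mcp by auto
      ultimately have "sqrt (real p) / psi k mc < sqrt (real p) / psi k m0"
        using psi0 sp by (simp add: divide_strict_left_mono)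
      moreover have "lambda1 p k = sqrt (real p) / psi k mc"
        using L \<open>psi k mc > 0\<close> by (simp add: field_simps)
      ultimately show ?thesis unfolding lam0_def by simp
    qed
    have eq0: "mstar_eq p k lam0 m0" using eq_iff[OF lam0p p1] m0p L0 by simp
    have ism0: "is_mstar p k lam0 m0"
      unfolding is_mstar_def
    proof (intro conjI allI impI eq0)
      fix m' assume "mstar_eq p k lam0 m'"
      then have m': "0 < m'" "m' < 1" "lam0 * psi k m' = sqrt (real p)"
        using eq_iff[OF lam0p p1] by auto
      show "m' \<le> m0"
      proof (rule ccontr)
        assume "\<not> m' \<le> m0"
        then have "psi k m' < psi k m0"
          using m0p m' k1 acm0 by (intro psi_dec) auto
        then have "lam0 * psi k m' < lam0 * psi k m0"
          using lam0p by simp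
        then show False using L0 m' by simp
      qed
    qed
    have "m_lam p k lam0 \<le> m0"
      using mlam_iff[OF p3 k1 lam0p m0p(1) m0p(2) L0] m0p by simp
    then have inS: "lam0 \<in> S" unfolding S_def using lam0p ism0 gt by auto
    have lb: "lam0 \<le> lam" if "lam \<in> S" for lam
    proof -
      from that obtain m where lp: "lam > 0" and im: "is_mstar p k lam m" and ml: "m_lam p k lam \<le> m"
        unfolding S_def by auto
      have m: "0 < m" "m < 1" "lam * psi k m = sqrt (real p)"
        using im eq_iff[OF lp p1] unfolding is_mstar_def by auto
      have "m0\<^sup>2 \<le> m\<^sup>2" using mlam_iff[OF p3 k1 lp m(1) m(2) m(3)] ml m0p by simp
      then have "m0 \<le> m" using power2_le_imp_le[of m0 m] m(1) by linarith
      show ?thesis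
      proof (cases "m = m0")
        case True
        then show ?thesis using m L0 psi0 lam0p by (simp add: lam0_def field_simps)
      next
        case False
        then have "m0 < m" using \<open>m0 \<le> m\<close> by simp
        then have "psi k m < psi k m0" using m0p m k1 acm0 by (intro psi_dec) auto
        moreover have "psi k m > 0" using psi_pos m by auto
        ultimately have "sqrt (real p) / psi k m0 < sqrt (real p) / psi k m"
          using psi0 sp by (simp add: divide_strict_left_mono)
        moreover have "lam = sqrt (real p) / psi k m"
          using m \<open>psi k m > 0\<close> by (simp add: field_simps)
        ultimately show ?thesis unfolding lam0_def by simp
      qed
    qed
    have "Inf S = lam0"
      by (rule cInf_eq_minimum[OF inS lb])
    then show ?thesis using False l2 gt by simp
  qed
qed

end
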